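(* Let $\mathbf C$ be an $r$-regular category, $f:Y\to X$ an arrow and $Z$ an object, and consider the pullback square formed by $f\times 1_Z:Y\times Z\to X\times Z$, $\pi_Y:Y\times Z\to Y$, $\pi_X:X\times Z\to X$ and $f$. Let $S\in\mathsf{Sub}_r(X\times Z)$ and let $B_1,\dots,B_n\in\mathsf{Sub}_r(X)$ satisfy: (a) $\pi_X^{-1}(B_i)\le S$ for all $i$, and (b) for every $D\in\mathsf{Sub}_r(X)$ with $\pi_X^{-1}(D)\le S$ there is $i$ with $D\le B_i$. Then $f^{-1}(B_1),\dots,f^{-1}(B_n)\in\mathsf{Sub}_r(Y)$ satisfy the same properties with respect to $(f\times 1)^{-1}(S)$: (a') $\pi_Y^{-1}(f^{-1}(B_i))\le(f\times 1)^{-1}(S)$ for all $i$, and (b') for every $D\in\mathsf{Sub}_r(Y)$ with $\pi_Y^{-1}(D)\le(f\times1)^{-1}(S)$ there is $i$ with $D\le f^{-1}(B_i)$.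
   Context: A category is $r$-regular if it has all finite limits, epimorphisms are stable under pullback, and every arrow factors as an epimorphism followed by a regular monomorphism. $\mathsf{Sub}_r(X)$ is the poset of regular subobjects of $X$ and, for an arrow $g:Y\to X$, $g^{-1}:\mathsf{Sub}_r(X)\to\mathsf{Sub}_r(Y)$ is pullback along $g$; $\pi_X$, $\pi_Y$ are product projections. *)

theory Defs
  imports Main
begin

text \<open>Categories given explicitly by objects, arrows, domain, codomain,
composition (Comp g f = g after f) and identities.\<close>

record ('o,'a) cat =
  Ob :: "'o set"
  Ar :: "'a set"
  Dom :: "'a \<Rightarrow> 'o"
  Cod :: "'a \<Rightarrow> 'o"
  Comp :: "'a \<Rightarrow> 'a \<Rightarrow> 'a"
  Ident :: "'o \<Rightarrow> 'a"

definition hom :: "('o,'a) cat \<Rightarrow> 'o \<Rightarrow> 'o \<Rightarrow> 'a set" where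
  "hom C x y = {f \<in> Ar C. Dom C f = x \<and> Cod C f = y}"

definition is_category :: "('o,'a) cat \<Rightarrow> bool" where
  "is_category C \<longleftrightarrow>
     (\<forall>f \<in> Ar C. Dom C f \<in> Ob C \<and> Cod C f \<in> Ob C) \<and>
     (\<forall>x \<in> Ob C. Ident C x \<in> hom C x x) \<and>
     (\<forall>f \<in> Ar C. \<forall>g \<in> Ar C. Cod C f = Dom C g \<longrightarrow>
        Comp C g f \<in> hom C (Dom C f) (Cod C g)) \<and>
     (\<forall>f \<in> Ar C. \<forall>g \<in> Ar C. \<forall>h \<in> Ar C. Cod C f = Dom C g \<and> Cod C g = Dom C h \<longrightarrow>
        Comp C h (Comp C g f) = Comp C (Comp C h g) f) \<and>
     (\<forall>f \<in> Ar C. Comp C (Ident C (Cod C f)) f = f \<and> Comp C f (Ident C (Dom C f)) = f)"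

definition mono :: "('o,'a) cat \<Rightarrow> 'a \<Rightarrow> bool" where
  "mono C m \<longleftrightarrow> m \<in> Ar C \<and>
     (\<forall>g \<in> Ar C. \<forall>h \<in> Ar C. Cod C g = Dom C m \<and> Cod C h = Dom C m \<and> Dom C g = Dom C h
        \<and> Comp C m g = Comp C m h \<longrightarrow> g = h)"

definition epi :: "('o,'a) cat \<Rightarrow> 'a \<Rightarrow> bool" where
  "epi C e \<longleftrightarrow> e \<in> Ar C \<and>
     (\<forall>g \<in> Ar C. \<forall>h \<in> Ar C. Dom C g = Cod C e \<and> Dom C h = Cod C e \<and> Cod C g = Cod C h
        \<and> Comp C g e = Comp C h e \<longrightarrow> g = h)"

definition is_pullback :: "('o,'a) cat \<Rightarrow> 'a \<Rightarrow> 'a \<Rightarrow> 'a \<Rightarrow> 'a \<Rightarrow> bool" where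
  "is_pullback C f g p q \<longleftrightarrow>
     f \<in> Ar C \<and> g \<in> Ar C \<and> p \<in> Ar C \<and> q \<in> Ar C \<and>
     Cod C f = Cod C g \<and> Cod C p = Dom C f \<and> Cod C q = Dom C g \<and> Dom C p = Dom C q \<and>
     Comp C f p = Comp C g q \<and>
     (\<forall>a \<in> Ar C. \<forall>b \<in> Ar C. Cod C a = Dom C f \<and> Cod C b = Dom C g \<and> Dom C a = Dom C b
        \<and> Comp C f a = Comp C g b \<longrightarrow>
        (\<exists>!u. u \<in> hom C (Dom C a) (Dom C p) \<and> Comp C p u = a \<and> Comp C q u = b))"

definition is_equalizer :: "('o,'a) cat \<Rightarrow> 'a \<Rightarrow> 'a \<Rightarrow> 'a \<Rightarrow> bool" where
  "is_equalizer C f g e \<longleftrightarrow>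
     f \<in> Ar C \<and> g \<in> Ar C \<and> e \<in> Ar C \<and>
     Dom C f = Dom C g \<and> Cod C f = Cod C g \<and> Cod C e = Dom C f \<and>
     Comp C f e = Comp C g e \<and>
     (\<forall>a \<in> Ar C. Cod C a = Dom C f \<and> Comp C f a = Comp C g a \<longrightarrow>
        (\<exists>!u. u \<in> hom C (Dom C a) (Dom C e) \<and> Comp C e u = a))"

definition regular_mono :: "('o,'a) cat \<Rightarrow> 'a \<Rightarrow> bool" where
  "regular_mono C m \<longleftrightarrow> (\<exists>f g. is_equalizer C f g m)"

definition is_terminal :: "('o,'a) cat \<Rightarrow> 'o \<Rightarrow> bool" where
  "is_terminal C t \<longleftrightarrow> t \<in> Ob C \<and> (\<forall>x \<in> Ob C. \<exists>!u. u \<in> hom C x t)"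

definition is_product :: "('o,'a) cat \<Rightarrow> 'o \<Rightarrow> 'o \<Rightarrow> 'o \<Rightarrow> 'a \<Rightarrow> 'a \<Rightarrow> bool" where
  "is_product C X Y P p1 p2 \<longleftrightarrow>
     P \<in> Ob C \<and> p1 \<in> hom C P X \<and> p2 \<in> hom C P Y \<and>
     (\<forall>Q \<in> Ob C. \<forall>a \<in> hom C Q X. \<forall>b \<in> hom C Q Y.
        (\<exists>!u. u \<in> hom C Q P \<and> Comp C p1 u = a \<and> Comp C p2 u = b))"

definition has_finite_limits :: "('o,'a) cat \<Rightarrow> bool" where
  "has_finite_limits C \<longleftrightarrow>
     (\<exists>t. is_terminal C t) \<and>
     (\<forall>X \<in> Ob C. \<forall>Y \<in> Ob C. \<exists>P p1 p2. is_product C X Y P p1 p2) \<and>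
     (\<forall>f \<in> Ar C. \<forall>g \<in> Ar C. Dom C f = Dom C g \<and> Cod C f = Cod C g \<longrightarrow>
        (\<exists>e. is_equalizer C f g e))"

definition r_regular :: "('o,'a) cat \<Rightarrow> bool" where
  "r_regular C \<longleftrightarrow> is_category C \<and> has_finite_limits C \<and>
     (\<forall>f g p q. is_pullback C f g p q \<and> epi C g \<longrightarrow> epi C p) \<and>
     (\<forall>f \<in> Ar C. \<exists>e m. epi C e \<and> regular_mono C m \<and> Dom C m = Cod C e \<and> Comp C m e = f)"

text \<open>Regular subobjects of X are represented by regular monos with codomain X;
  all notions below are invariant under isomorphism of representatives.\<close>
definition reg_sub :: "('o,'a) cat \<Rightarrow> 'o \<Rightarrow> 'a set" where
  "reg_sub C X = {m. regular_mono C m \<and> Cod C m = X}"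

definition sub_le :: "('o,'a) cat \<Rightarrow> 'a \<Rightarrow> 'a \<Rightarrow> bool" where
  "sub_le C m n \<longleftrightarrow> (\<exists>u. u \<in> hom C (Dom C m) (Dom C n) \<and> Comp C n u = m)"

definition inv_img :: "('o,'a) cat \<Rightarrow> 'a \<Rightarrow> 'a \<Rightarrow> 'a" where
  "inv_img C g m = (SOME q. \<exists>p. is_pullback C m g p q)"

end

theory Submission imports Defs begin

locale category = fixes C :: "('o,'a) cat" assumes cat: "is_category C"
begin

abbreviation cmp (infixr "\<cdot>" 55) where "g \<cdot> f \<equiv> Comp C g f"

lemma hom_iff: "u \<in> hom C a b \<longleftrightarrow> u \<in> Ar C \<and> Dom C u = a \<and> Cod C u = b"
  by (simp add: hom_def)

lemma ar_dom: "f \<in> Ar C \<Longrightarrow> Dom C f \<in> Ob C" using cat by (simp add: is_category_def)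
lemma ar_cod: "f \<in> Ar C \<Longrightarrow> Cod C f \<in> Ob C" using cat by (simp add: is_category_def)

lemma comp_hom: "f \<in> Ar C \<Longrightarrow> g \<in> Ar C \<Longrightarrow> Cod C f = Dom C g \<Longrightarrow> g \<cdot> f \<in> hom C (Dom C f) (Cod C g)"
  using cat unfolding is_category_def by blast
lemma comp_ar: "f \<in> Ar C \<Longrightarrow> g \<in> Ar C \<Longrightarrow> Cod C f = Dom C g \<Longrightarrow> g \<cdot> f \<in> Ar C"
  using comp_hom by (simp add: hom_def)
lemma comp_dom: "f \<in> Ar C \<Longrightarrow> g \<in> Ar C \<Longrightarrow> Cod C f = Dom C g \<Longrightarrow> Dom C (g \<cdot> f) = Dom C f"
  using comp_hom by (simp add: hom_def)
lemma comp_cod: "f \<in> Ar C \<Longrightarrow> g \<in> Ar C \<Longrightarrow> Cod C f = Dom C g \<Longrightarrow> Cod C (g \<cdot> f) = Cod C g"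
  using comp_hom by (simp add: hom_def)
lemma assoc: "f \<in> Ar C \<Longrightarrow> g \<in> Ar C \<Longrightarrow> h \<in> Ar C \<Longrightarrow> Cod C f = Dom C g \<Longrightarrow> Cod C g = Dom C h \<Longrightarrow>
   h \<cdot> (g \<cdot> f) = (h \<cdot> g) \<cdot> f"
  using cat unfolding is_category_def by blast
lemma id_hom: "x \<in> Ob C \<Longrightarrow> Ident C x \<in> hom C x x"
  using cat unfolding is_category_def by blast
lemma id_right: "f \<in> Ar C \<Longrightarrow> f \<cdot> Ident C (Dom C f) = f"
  using cat unfolding is_category_def by blast

lemmas cs = comp_ar comp_dom comp_cod

lemma sub_le_refl: "x \<in> Ar C \<Longrightarrow> sub_le C x x"
  unfolding sub_le_def using id_hom[OF ar_dom] id_right by blast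

lemma sub_le_comp: "x \<in> Ar C \<Longrightarrow> y \<in> Ar C \<Longrightarrow> Cod C y = Dom C x \<Longrightarrow> sub_le C (x \<cdot> y) x"
  unfolding sub_le_def hom_iff by (auto simp: cs)

lemma sub_le_trans:
  assumes "sub_le C x y" "sub_le C y z" "y \<in> Ar C" "z \<in> Ar C"
  shows "sub_le C x z"
proof -
  obtain u where u: "u \<in> Ar C" "Dom C u = Dom C x" "Cod C u = Dom C y" "y \<cdot> u = x"
    using assms(1) unfolding sub_le_def hom_iff by blast
  obtain v where v: "v \<in> Ar C" "Dom C v = Dom C y" "Cod C v = Dom C z" "z \<cdot> v = y"
    using assms(2) unfolding sub_le_def hom_iff by blast
  have "x = z \<cdot> (v \<cdot> u)" using u v assms by (simp add: assoc)
  moreover have "v \<cdot> u \<in> Ar C" "Dom C (v \<cdot> u) = Dom C x" "Cod C (v \<cdot> u) = Dom C z"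
    using u v by (auto simp: cs)
  ultimately show ?thesis unfolding sub_le_def hom_iff by metis
qed

lemma pb_facts:
  assumes "is_pullback C m g p q"
  shows "m \<in> Ar C" "g \<in> Ar C" "p \<in> Ar C" "q \<in> Ar C" "Cod C m = Cod C g" "Cod C p = Dom C m"
    "Cod C q = Dom C g" "Dom C p = Dom C q" "m \<cdot> p = g \<cdot> q"
  using assms unfolding is_pullback_def by auto

lemma pb_univ:
  assumes "is_pullback C m g p q" "a \<in> Ar C" "b \<in> Ar C" "Cod C a = Dom C m" "Cod C b = Dom C g"
    "Dom C a = Dom C b" "m \<cdot> a = g \<cdot> b"
  shows "\<exists>u. u \<in> hom C (Dom C a) (Dom C p) \<and> p \<cdot> u = a \<and> q \<cdot> u = b"
  using assms unfolding is_pullback_def by blast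

lemma pb_sub_le:
  assumes pb: "is_pullback C m g p q" and x: "x \<in> Ar C" "Cod C x = Dom C g"
  shows "sub_le C x q \<longleftrightarrow> sub_le C (g \<cdot> x) m"
proof
  assume "sub_le C x q"
  then obtain u where u: "u \<in> Ar C" "Dom C u = Dom C x" "Cod C u = Dom C q" "q \<cdot> u = x"
    unfolding sub_le_def hom_iff by blast
  note f = pb_facts[OF pb]
  have "g \<cdot> x = m \<cdot> (p \<cdot> u)" using u f by (metis assoc)
  moreover have "p \<cdot> u \<in> Ar C" "Dom C (p \<cdot> u) = Dom C (g \<cdot> x)" "Cod C (p \<cdot> u) = Dom C m"
    using u f x by (auto simp: cs)
  ultimately show "sub_le C (g \<cdot> x) m" unfolding sub_le_def hom_iff by metis
next
  assume "sub_le C (g \<cdot> x) m"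
  then obtain v where v: "v \<in> Ar C" "Dom C v = Dom C (g \<cdot> x)" "Cod C v = Dom C m" "m \<cdot> v = g \<cdot> x"
    unfolding sub_le_def hom_iff by blast
  note f = pb_facts[OF pb]
  have dv: "Dom C v = Dom C x" using v x f by (simp add: cs)
  obtain u where "u \<in> hom C (Dom C v) (Dom C p)" "p \<cdot> u = v" "q \<cdot> u = x"
    using pb_univ[OF pb v(1) x(1) v(3) x(2) dv v(4)] by blast
  then show "sub_le C x q" unfolding sub_le_def using dv f by auto
qed

lemma eq_facts:
  assumes "is_equalizer C s1 s2 e"
  shows "s1 \<in> Ar C" "s2 \<in> Ar C" "e \<in> Ar C" "Dom C s1 = Dom C s2" "Cod C s1 = Cod C s2"
    "Cod C e = Dom C s1" "s1 \<cdot> e = s2 \<cdot> e"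
  using assms unfolding is_equalizer_def by auto

lemma eq_sub_le:
  assumes eq: "is_equalizer C s1 s2 e" and x: "x \<in> Ar C" "Cod C x = Dom C s1"
  shows "sub_le C x e \<longleftrightarrow> s1 \<cdot> x = s2 \<cdot> x"
proof
  assume "sub_le C x e"
  then obtain u where u: "u \<in> Ar C" "Dom C u = Dom C x" "Cod C u = Dom C e" "e \<cdot> u = x"
    unfolding sub_le_def hom_iff by blast
  note f = eq_facts[OF eq]
  show "s1 \<cdot> x = s2 \<cdot> x" using u f by (metis assoc)
next
  assume "s1 \<cdot> x = s2 \<cdot> x"
  then show "sub_le C x e" using eq x unfolding is_equalizer_def sub_le_def by blast
qed

lemma reg_ar: "regular_mono C m \<Longrightarrow> m \<in> Ar C"
  unfolding regular_mono_def using eq_facts by blast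

lemma prod_facts:
  assumes "is_product C X Y P p1 p2"
  shows "P \<in> Ob C" "p1 \<in> Ar C" "p2 \<in> Ar C" "Dom C p1 = P" "Dom C p2 = P" "Cod C p1 = X" "Cod C p2 = Y"
  using assms unfolding is_product_def hom_iff by auto

lemma ex1_eq: "\<exists>!x. P x \<Longrightarrow> P a \<Longrightarrow> P b \<Longrightarrow> a = b" by blast

lemma prod_univ1:
  assumes "is_product C X Y P p1 p2" "Q \<in> Ob C" "a \<in> hom C Q X" "b \<in> hom C Q Y"
  shows "\<exists>!u. u \<in> hom C Q P \<and> p1 \<cdot> u = a \<and> p2 \<cdot> u = b"
proof -
  have "\<forall>Q \<in> Ob C. \<forall>a \<in> hom C Q X. \<forall>b \<in> hom C Q Y.
        (\<exists>!u. u \<in> hom C Q P \<and> p1 \<cdot> u = a \<and> p2 \<cdot> u = b)"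
    using assms(1) unfolding is_product_def by (rule conjunct2[THEN conjunct2[THEN conjunct2]])
  then show ?thesis using assms(2-4) by blast
qed

lemma eq_univ1:
  assumes "is_equalizer C s1 s2 e" "a \<in> Ar C" "Cod C a = Dom C s1" "s1 \<cdot> a = s2 \<cdot> a"
  shows "\<exists>!u. u \<in> hom C (Dom C a) (Dom C e) \<and> e \<cdot> u = a"
proof -
  have "\<forall>a \<in> Ar C. Cod C a = Dom C s1 \<and> s1 \<cdot> a = s2 \<cdot> a \<longrightarrow>
        (\<exists>!u. u \<in> hom C (Dom C a) (Dom C e) \<and> e \<cdot> u = a)"
    using assms(1) unfolding is_equalizer_def by (elim conjE)
  then show ?thesis using assms(2-4) by blast
qed

lemma pb_univ1:
  assumes "is_pullback C m g p q" "a \<in> Ar C" "b \<in> Ar C" "Cod C a = Dom C m" "Cod C b = Dom C g"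
    "Dom C a = Dom C b" "m \<cdot> a = g \<cdot> b"
  shows "\<exists>!u. u \<in> hom C (Dom C a) (Dom C p) \<and> p \<cdot> u = a \<and> q \<cdot> u = b"
proof -
  have "\<forall>a \<in> Ar C. \<forall>b \<in> Ar C. Cod C a = Dom C m \<and> Cod C b = Dom C g \<and> Dom C a = Dom C b
        \<and> m \<cdot> a = g \<cdot> b \<longrightarrow>
        (\<exists>!u. u \<in> hom C (Dom C a) (Dom C p) \<and> p \<cdot> u = a \<and> q \<cdot> u = b)"
    using assms(1) unfolding is_pullback_def by (elim conjE)
  then show ?thesis using assms(2-7) by blast
qed

lemma prod_ex:
  assumes "is_product C X Y P p1 p2" "a \<in> Ar C" "b \<in> Ar C" "Dom C a = Dom C b" "Cod C a = X" "Cod C b = Y"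
  shows "\<exists>u. u \<in> hom C (Dom C a) P \<and> p1 \<cdot> u = a \<and> p2 \<cdot> u = b"
proof -
  have Q: "Dom C a \<in> Ob C" using assms(2) ar_dom by blast
  have "a \<in> hom C (Dom C a) X" "b \<in> hom C (Dom C a) Y" using assms by (auto simp: hom_iff)
  from prod_univ1[OF assms(1) Q this] show ?thesis by (rule ex1_implies_ex)
qed

lemma prod_uniq:
  assumes "is_product C X Y P p1 p2" "u \<in> hom C Q P" "v \<in> hom C Q P" "p1 \<cdot> u = p1 \<cdot> v" "p2 \<cdot> u = p2 \<cdot> v"
  shows "u = v"
proof -
  note f = prod_facts[OF assms(1)]
  have Q: "Q \<in> Ob C" using assms(2) ar_dom by (auto simp: hom_iff)
  have "p1 \<cdot> u \<in> hom C Q X" "p2 \<cdot> u \<in> hom C Q Y" using assms(2) f by (auto simp: hom_iff cs)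
  from prod_univ1[OF assms(1) Q this] have "\<exists>!w. w \<in> hom C Q P \<and> p1 \<cdot> w = p1 \<cdot> u \<and> p2 \<cdot> w = p2 \<cdot> u" .
  then show ?thesis by (rule ex1_eq) (use assms in auto)
qed

lemma pb_exists:
  assumes lim: "has_finite_limits C" and m: "m \<in> Ar C" and g: "g \<in> Ar C" and c: "Cod C m = Cod C g"
  shows "\<exists>p q. is_pullback C m g p q"
proof -
  have allprod: "\<forall>X \<in> Ob C. \<forall>Y \<in> Ob C. \<exists>P p1 p2. is_product C X Y P p1 p2"
   and alleq: "\<forall>f \<in> Ar C. \<forall>g \<in> Ar C. Dom C f = Dom C g \<and> Cod C f = Cod C g \<longrightarrow>
        (\<exists>e. is_equalizer C f g e)"
    using lim unfolding has_finite_limits_def by blast+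
  obtain P p1 p2 where pr: "is_product C (Dom C m) (Dom C g) P p1 p2"
    using allprod ar_dom[OF m] ar_dom[OF g] by blast
  note pf = prod_facts[OF pr]
  have a: "m \<cdot> p1 \<in> Ar C" "Dom C (m \<cdot> p1) = P" "Cod C (m \<cdot> p1) = Cod C m"
    using pf m by (auto simp: cs)
  have b: "g \<cdot> p2 \<in> Ar C" "Dom C (g \<cdot> p2) = P" "Cod C (g \<cdot> p2) = Cod C m"
    using pf g c by (auto simp: cs)
  have "\<exists>e. is_equalizer C (m \<cdot> p1) (g \<cdot> p2) e"
    using alleq a b by simp
  then obtain e where eq: "is_equalizer C (m \<cdot> p1) (g \<cdot> p2) e" by blast
  note ef = eq_facts[OF eq]
  have ce: "Cod C e = P" using ef a by simp
  have sq: "m \<cdot> (p1 \<cdot> e) = g \<cdot> (p2 \<cdot> e)"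
  proof -
    have "m \<cdot> (p1 \<cdot> e) = (m \<cdot> p1) \<cdot> e" by (rule assoc) (use ef pf m ce in auto)
    also have "\<dots> = (g \<cdot> p2) \<cdot> e" using ef by simp
    also have "\<dots> = g \<cdot> (p2 \<cdot> e)" by (rule assoc[symmetric]) (use ef pf g ce in auto)
    finally show ?thesis .
  qed
  have "is_pullback C m g (p1 \<cdot> e) (p2 \<cdot> e)"
    unfolding is_pullback_def
  proof (intro conjI ballI impI)
    show "p1 \<cdot> e \<in> Ar C" "p2 \<cdot> e \<in> Ar C" "Cod C (p1 \<cdot> e) = Dom C m" "Cod C (p2 \<cdot> e) = Dom C g"
      "Dom C (p1 \<cdot> e) = Dom C (p2 \<cdot> e)"
      using pf ef ce by (auto simp: cs)
  next
    fix a' b' assume ab: "a' \<in> Ar C" "b' \<in> Ar C"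
      and h: "Cod C a' = Dom C m \<and> Cod C b' = Dom C g \<and> Dom C a' = Dom C b' \<and> m \<cdot> a' = g \<cdot> b'"
    have "\<exists>k. k \<in> hom C (Dom C a') P \<and> p1 \<cdot> k = a' \<and> p2 \<cdot> k = b'"
      using prod_ex[OF pr ab] h by simp
    then obtain k where k: "k \<in> hom C (Dom C a') P" "p1 \<cdot> k = a'" "p2 \<cdot> k = b'" by blast
    have kk: "k \<in> Ar C" "Dom C k = Dom C a'" "Cod C k = P" using k by (auto simp: hom_iff)
    have "(m \<cdot> p1) \<cdot> k = m \<cdot> (p1 \<cdot> k)" by (rule assoc[symmetric]) (use kk pf m in auto)
    also have "\<dots> = g \<cdot> (p2 \<cdot> k)" using k h by simp
    also have "\<dots> = (g \<cdot> p2) \<cdot> k" by (rule assoc) (use kk pf g in auto)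
    finally have keq: "(m \<cdot> p1) \<cdot> k = (g \<cdot> p2) \<cdot> k" .
    have U: "\<exists>!u. u \<in> hom C (Dom C k) (Dom C e) \<and> e \<cdot> u = k"
      by (rule eq_univ1[OF eq kk(1) _ keq]) (use kk a in simp)
    then obtain u where u: "u \<in> hom C (Dom C k) (Dom C e)" "e \<cdot> u = k" by blast
    have ua: "u \<in> Ar C" "Dom C u = Dom C a'" "Cod C u = Dom C e" using u kk by (auto simp: hom_iff)
    show "\<exists>!u. u \<in> hom C (Dom C a') (Dom C (p1 \<cdot> e)) \<and> (p1 \<cdot> e) \<cdot> u = a' \<and> (p2 \<cdot> e) \<cdot> u = b'"
    proof (rule ex1I[of _ u])
      have d: "Dom C (p1 \<cdot> e) = Dom C e" using pf ef ce by (simp add: cs)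
      have "(p1 \<cdot> e) \<cdot> u = p1 \<cdot> (e \<cdot> u)" by (rule assoc[symmetric]) (use ua ef pf ce in auto)
      moreover have "(p2 \<cdot> e) \<cdot> u = p2 \<cdot> (e \<cdot> u)" by (rule assoc[symmetric]) (use ua ef pf ce in auto)
      ultimately show "u \<in> hom C (Dom C a') (Dom C (p1 \<cdot> e)) \<and> (p1 \<cdot> e) \<cdot> u = a' \<and> (p2 \<cdot> e) \<cdot> u = b'"
        using u(2) k ua d by (simp add: hom_iff)
    next
      fix w assume w: "w \<in> hom C (Dom C a') (Dom C (p1 \<cdot> e)) \<and> (p1 \<cdot> e) \<cdot> w = a' \<and> (p2 \<cdot> e) \<cdot> w = b'"
      have d: "Dom C (p1 \<cdot> e) = Dom C e" using pf ef ce by (simp add: cs)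
      have wa: "w \<in> Ar C" "Dom C w = Dom C a'" "Cod C w = Dom C e" using w d by (auto simp: hom_iff)
      have ewh: "e \<cdot> w \<in> hom C (Dom C a') P" using wa ef ce by (auto simp: hom_iff cs)
      have "p1 \<cdot> (e \<cdot> w) = (p1 \<cdot> e) \<cdot> w" by (rule assoc) (use wa ef pf ce in auto)
      then have 1: "p1 \<cdot> (e \<cdot> w) = p1 \<cdot> k" using w k by simp
      have "p2 \<cdot> (e \<cdot> w) = (p2 \<cdot> e) \<cdot> w" by (rule assoc) (use wa ef pf ce in auto)
      then have 2: "p2 \<cdot> (e \<cdot> w) = p2 \<cdot> k" using w k by simp
      have "e \<cdot> w = k" using prod_uniq[OF pr ewh k(1) 1 2] .
      then show "w = u" by (intro ex1_eq[OF U]) (use wa u kk in \<open>auto simp: hom_iff\<close>)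
    qed
  qed (use m g c sq in auto)
  then show ?thesis by blast
qed

lemma inv_img_pb:
  assumes "has_finite_limits C" "m \<in> Ar C" "g \<in> Ar C" "Cod C m = Cod C g"
  shows "\<exists>p. is_pullback C m g p (inv_img C g m)"
proof -
  obtain p0 q0 where "is_pullback C m g p0 q0" using pb_exists[OF assms] by blast
  then have "\<exists>q p. is_pullback C m g p q" by blast
  then have "\<exists>p. is_pullback C m g p (SOME q. \<exists>p. is_pullback C m g p q)" by (rule someI_ex)
  then show ?thesis unfolding inv_img_def .
qed

lemma pb_regular:
  assumes pb: "is_pullback C m g p q" and eq: "is_equalizer C s1 s2 m"
  shows "is_equalizer C (s1 \<cdot> g) (s2 \<cdot> g) q"
proof -
  note f = pb_facts[OF pb] and ef = eq_facts[OF eq]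
  have gs: "Cod C g = Dom C s1" "Cod C g = Dom C s2" using f ef by auto
  show ?thesis unfolding is_equalizer_def
  proof (intro conjI ballI impI)
    show "s1 \<cdot> g \<in> Ar C" "s2 \<cdot> g \<in> Ar C" "Dom C (s1 \<cdot> g) = Dom C (s2 \<cdot> g)"
      "Cod C (s1 \<cdot> g) = Cod C (s2 \<cdot> g)" "Cod C q = Dom C (s1 \<cdot> g)"
      using f ef gs by (auto simp: cs)
    have "(s1 \<cdot> g) \<cdot> q = s1 \<cdot> (m \<cdot> p)" using f ef gs by (metis assoc)
    also have "\<dots> = s2 \<cdot> (m \<cdot> p)" using f ef by (metis assoc)
    also have "\<dots> = (s2 \<cdot> g) \<cdot> q" using f ef gs by (metis assoc)
    finally show "(s1 \<cdot> g) \<cdot> q = (s2 \<cdot> g) \<cdot> q" .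
  next
    fix a assume a: "a \<in> Ar C" "Cod C a = Dom C (s1 \<cdot> g) \<and> (s1 \<cdot> g) \<cdot> a = (s2 \<cdot> g) \<cdot> a"
    have ca: "Cod C a = Dom C g" using a f gs ef by (simp add: cs)
    have ga: "g \<cdot> a \<in> Ar C" "Cod C (g \<cdot> a) = Dom C s1" "Dom C (g \<cdot> a) = Dom C a"
      using a ca f gs by (auto simp: cs)
    have "s1 \<cdot> (g \<cdot> a) = s2 \<cdot> (g \<cdot> a)" using a ca f ef gs by (metis assoc)
    then obtain v where v: "v \<in> hom C (Dom C a) (Dom C m)" "m \<cdot> v = g \<cdot> a"
      and vu: "\<And>w. w \<in> hom C (Dom C a) (Dom C m) \<and> m \<cdot> w = g \<cdot> a \<Longrightarrow> w = v"
      using eq ga unfolding is_equalizer_def by metis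
    have va: "v \<in> Ar C" "Dom C v = Dom C a" "Cod C v = Dom C m" using v by (auto simp: hom_iff)
    obtain u where u: "u \<in> hom C (Dom C v) (Dom C p)" "p \<cdot> u = v" "q \<cdot> u = a"
      using pb_univ[OF pb va(1) a(1) va(3) ca va(2) v(2)] by blast
    show "\<exists>!u. u \<in> hom C (Dom C a) (Dom C q) \<and> q \<cdot> u = a"
    proof (rule ex1I[of _ u])
      show "u \<in> hom C (Dom C a) (Dom C q) \<and> q \<cdot> u = a" using u va f by auto
    next
      fix w assume w: "w \<in> hom C (Dom C a) (Dom C q) \<and> q \<cdot> w = a"
      have wa: "w \<in> Ar C" "Dom C w = Dom C a" "Cod C w = Dom C q" using w by (auto simp: hom_iff)
      have ua: "u \<in> Ar C" "Dom C u = Dom C a" "Cod C u = Dom C q" using u va f by (auto simp: hom_iff)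
      have "p \<cdot> w \<in> hom C (Dom C a) (Dom C m)" using wa f by (auto simp: hom_iff cs)
      moreover have "m \<cdot> (p \<cdot> w) = g \<cdot> a" using w wa f by (metis assoc)
      ultimately have pw: "p \<cdot> w = v" using vu by blast
      have "\<exists>!z. z \<in> hom C (Dom C v) (Dom C p) \<and> p \<cdot> z = v \<and> q \<cdot> z = a"
        using pb va a ca v unfolding is_pullback_def by metis
      then show "w = u" using u w pw va f by (auto simp: hom_iff)
    qed
  qed (use f in auto)
qed

end

theorem mainTheorem7:
  fixes C :: "('o,'a) cat"
    and X Y Z XZ YZ :: 'o
    and f piX pZX piY pZY fz S :: 'a
    and B :: "nat \<Rightarrow> 'a" and n :: nat
  assumes reg: "r_regular C"
    and f: "f \<in> hom C Y X" and Z: "Z \<in> Ob C"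
    and prodX: "is_product C X Z XZ piX pZX"
    and prodY: "is_product C Y Z YZ piY pZY"
    and fz: "fz \<in> hom C YZ XZ" "Comp C piX fz = Comp C f piY" "Comp C pZX fz = pZY"
    and S: "S \<in> reg_sub C XZ"
    and B: "\<forall>i \<in> {1..n}. B i \<in> reg_sub C X"
    and a: "\<forall>i \<in> {1..n}. sub_le C (inv_img C piX (B i)) S"
    and b: "\<forall>D \<in> reg_sub C X. sub_le C (inv_img C piX D) S \<longrightarrow>
              (\<exists>i \<in> {1..n}. sub_le C D (B i))"
  shows "(\<forall>i \<in> {1..n}. inv_img C f (B i) \<in> reg_sub C Y) \<and>
         (\<forall>i \<in> {1..n}. sub_le C (inv_img C piY (inv_img C f (B i))) (inv_img C fz S)) \<and>
         (\<forall>D \<in> reg_sub C Y. sub_le C (inv_img C piY D) (inv_img C fz S) \<longrightarrow>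
              (\<exists>i \<in> {1..n}. sub_le C D (inv_img C f (B i))))"
proof -
  have cat: "is_category C" and lim: "has_finite_limits C"
    and stab: "\<And>f g p q. is_pullback C f g p q \<Longrightarrow> epi C g \<Longrightarrow> epi C p"
    and fac: "\<And>h. h \<in> Ar C \<Longrightarrow> \<exists>e m. epi C e \<and> regular_mono C m \<and> Dom C m = Cod C e \<and> Comp C m e = h"
    using reg unfolding r_regular_def by blast+
  interpret category C by (rule category.intro[OF cat])
  have fa: "f \<in> Ar C" "Dom C f = Y" "Cod C f = X" using f by (auto simp: hom_iff)
  note px = prod_facts[OF prodX] and py = prod_facts[OF prodY]
  have fza: "fz \<in> Ar C" "Dom C fz = YZ" "Cod C fz = XZ" using fz by (auto simp: hom_iff)
  have Sr: "regular_mono C S" "Cod C S = XZ" "S \<in> Ar C" using S reg_ar by (auto simp: reg_sub_def)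
  then obtain s1 s2 where seq: "is_equalizer C s1 s2 S" unfolding regular_mono_def by blast
  note sf = eq_facts[OF seq]
  have "Cod C S = Cod C fz" using Sr fza by simp
  then obtain pS where pbS: "is_pullback C S fz pS (inv_img C fz S)"
    using inv_img_pb[OF lim Sr(3) fza(1)] by blast
  have Bi: "B i \<in> Ar C" "Cod C (B i) = X" "regular_mono C (B i)" if "i \<in> {1..n}" for i
    using B that reg_ar by (auto simp: reg_sub_def)
  have pbf: "\<exists>p. is_pullback C (B i) f p (inv_img C f (B i))" if i: "i \<in> {1..n}" for i
  proof -
    have "Cod C (B i) = Cod C f" using Bi[OF i] fa by simp
    then show ?thesis using inv_img_pb[OF lim Bi(1)[OF i] fa(1)] by blast
  qed
  have P1: "inv_img C f (B i) \<in> reg_sub C Y" if i: "i \<in> {1..n}" for i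
  proof -
    obtain p where pb: "is_pullback C (B i) f p (inv_img C f (B i))" using pbf[OF i] by blast
    obtain t1 t2 where "is_equalizer C t1 t2 (B i)" using Bi(3)[OF i] unfolding regular_mono_def by blast
    from pb_regular[OF pb this] have "regular_mono C (inv_img C f (B i))"
      unfolding regular_mono_def by blast
    moreover have "Cod C (inv_img C f (B i)) = Y" using pb_facts(7)[OF pb] fa by simp
    ultimately show ?thesis by (simp add: reg_sub_def)
  qed
  have P2: "sub_le C (inv_img C piY (inv_img C f (B i))) (inv_img C fz S)" if i: "i \<in> {1..n}" for i
  proof -
    define c where "c = inv_img C f (B i)"
    obtain pc where pbc: "is_pullback C (B i) f pc c" using pbf[OF i] unfolding c_def by blast
    note cf = pb_facts[OF pbc]
    define t where "t = inv_img C piY c"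
    have "Cod C c = Cod C piY" using cf fa py by simp
    then obtain pt where pbt: "is_pullback C c piY pt t"
      using inv_img_pb[OF lim cf(4) py(2)] unfolding t_def by blast
    note tf = pb_facts[OF pbt]
    define r where "r = inv_img C piX (B i)"
    have "Cod C (B i) = Cod C piX" using Bi[OF i] px by simp
    then obtain pr where pbr: "is_pullback C (B i) piX pr r"
      using inv_img_pb[OF lim Bi(1)[OF i] px(2)] unfolding r_def by blast
    note rf = pb_facts[OF pbr]
    have cYt: "Cod C t = YZ" using tf py by simp
    have pyt: "piY \<cdot> t \<in> Ar C" "Cod C (piY \<cdot> t) = Dom C f" using tf py fa cYt by (auto simp: cs)
    have fzt: "fz \<cdot> t \<in> Ar C" "Cod C (fz \<cdot> t) = Dom C piX" using tf fza px cYt by (auto simp: cs)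
    have "sub_le C (piY \<cdot> t) c" using pb_sub_le[OF pbt tf(4) tf(7)] sub_le_refl[OF tf(4)] by blast
    then have "sub_le C (f \<cdot> (piY \<cdot> t)) (B i)" using pb_sub_le[OF pbc pyt] by blast
    moreover have "piX \<cdot> (fz \<cdot> t) = f \<cdot> (piY \<cdot> t)"
    proof -
      have "piX \<cdot> (fz \<cdot> t) = (piX \<cdot> fz) \<cdot> t"
        by (rule assoc) (use tf fza px cYt in auto)
      also have "\<dots> = (f \<cdot> piY) \<cdot> t" using fz(2) by simp
      also have "\<dots> = f \<cdot> (piY \<cdot> t)"
        by (rule assoc[symmetric]) (use tf fa py cYt in auto)
      finally show ?thesis .
    qed
    ultimately have "sub_le C (piX \<cdot> (fz \<cdot> t)) (B i)" by simp
    then have "sub_le C (fz \<cdot> t) r" using pb_sub_le[OF pbr fzt] by blast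
    moreover have "sub_le C r S" using a i unfolding r_def by blast
    ultimately have "sub_le C (fz \<cdot> t) S" using sub_le_trans[OF _ _ rf(4) Sr(3)] by blast
    moreover have "Cod C t = Dom C fz" using cYt fza by simp
    ultimately have "sub_le C t (inv_img C fz S)" using pb_sub_le[OF pbS tf(4)] by blast
    then show ?thesis unfolding t_def c_def .
  qed
  have P3: "\<exists>i \<in> {1..n}. sub_le C D (inv_img C f (B i))"
    if D: "D \<in> reg_sub C Y" and H: "sub_le C (inv_img C piY D) (inv_img C fz S)" for D
  proof -
    have Da: "D \<in> Ar C" "Cod C D = Y" using D reg_ar by (auto simp: reg_sub_def)
    have fd: "f \<cdot> D \<in> Ar C" using Da fa by (simp add: cs)
    obtain e m where em: "epi C e" "regular_mono C m" "Dom C m = Cod C e" "m \<cdot> e = f \<cdot> D"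
      using fac[OF fd] by blast
    have ea: "e \<in> Ar C" using em(1) unfolding epi_def by blast
    have ma: "m \<in> Ar C" using em(2) by (rule reg_ar)
    have mX: "Cod C m = X"
    proof -
      have "Cod C (m \<cdot> e) = Cod C m" using ea ma em(3) by (simp add: cs)
      moreover have "Cod C (f \<cdot> D) = X" using fa Da by (simp add: cs)
      ultimately show ?thesis using em(4) by simp
    qed
    have eD: "Dom C e = Dom C D"
    proof -
      have "Dom C (m \<cdot> e) = Dom C e" using ea ma em(3) by (simp add: cs)
      moreover have "Dom C (f \<cdot> D) = Dom C D" using fa Da by (simp add: cs)
      ultimately show ?thesis using em(4) by simp
    qed
    define q where "q = inv_img C piX m"
    have "Cod C m = Cod C piX" using mX px by simp
    then obtain p where pbq: "is_pullback C m piX p q"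
      using inv_img_pb[OF lim ma px(2)] unfolding q_def by blast
    note qf = pb_facts[OF pbq]
    have "Cod C p = Cod C e" using qf em(3) by simp
    then obtain k l where pbk: "is_pullback C p e k l"
      using pb_exists[OF lim qf(3) ea] by blast
    note kf = pb_facts[OF pbk]
    have epk: "epi C k" using stab[OF pbk em(1)] .
    have ck: "Cod C k = Dom C q" using kf qf by simp
    have cl: "Cod C l = Dom C D" using kf eD by simp
    have dl: "D \<cdot> l \<in> Ar C" "Dom C (D \<cdot> l) = Dom C k" "Cod C (D \<cdot> l) = Y"
      using kf Da cl by (auto simp: cs)
    have cq: "Cod C q = XZ" using qf px by simp
    have qk: "q \<cdot> k \<in> Ar C" "Dom C (q \<cdot> k) = Dom C k" "Cod C (q \<cdot> k) = XZ"
      using kf qf ck cq by (auto simp: cs)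
    have zq: "pZX \<cdot> (q \<cdot> k) \<in> Ar C" "Dom C (pZX \<cdot> (q \<cdot> k)) = Dom C k" "Cod C (pZX \<cdot> (q \<cdot> k)) = Z"
      using qk px by (auto simp: cs)
    have "\<exists>w. w \<in> hom C (Dom C (D \<cdot> l)) YZ \<and> piY \<cdot> w = D \<cdot> l \<and> pZY \<cdot> w = pZX \<cdot> (q \<cdot> k)"
      using prod_ex[OF prodY dl(1) zq(1)] dl zq by simp
    then obtain w where w: "w \<in> hom C (Dom C k) YZ" "piY \<cdot> w = D \<cdot> l" "pZY \<cdot> w = pZX \<cdot> (q \<cdot> k)"
      using dl by auto
    have wa: "w \<in> Ar C" "Dom C w = Dom C k" "Cod C w = YZ" using w by (auto simp: hom_iff)
    have "piX \<cdot> (fz \<cdot> w) = (piX \<cdot> fz) \<cdot> w" by (rule assoc) (use wa fza px in auto)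
    also have "\<dots> = (f \<cdot> piY) \<cdot> w" using fz(2) by simp
    also have "\<dots> = f \<cdot> (piY \<cdot> w)" by (rule assoc[symmetric]) (use wa fa py in auto)
    also have "\<dots> = f \<cdot> (D \<cdot> l)" using w by simp
    also have "\<dots> = (f \<cdot> D) \<cdot> l" by (rule assoc) (use kf Da fa cl in auto)
    also have "\<dots> = (m \<cdot> e) \<cdot> l" using em(4) by simp
    also have "\<dots> = m \<cdot> (e \<cdot> l)" by (rule assoc[symmetric]) (use kf ea ma em(3) in auto)
    also have "\<dots> = m \<cdot> (p \<cdot> k)" using kf(9) by simp
    also have "\<dots> = (m \<cdot> p) \<cdot> k" by (rule assoc) (use kf qf in auto)
    also have "\<dots> = (piX \<cdot> q) \<cdot> k" using qf(9) by simp
    also have "\<dots> = piX \<cdot> (q \<cdot> k)" by (rule assoc[symmetric]) (use kf qf ck in auto)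
    finally have e1: "piX \<cdot> (fz \<cdot> w) = piX \<cdot> (q \<cdot> k)" .
    have "pZX \<cdot> (fz \<cdot> w) = (pZX \<cdot> fz) \<cdot> w" by (rule assoc) (use wa fza px in auto)
    also have "\<dots> = pZY \<cdot> w" using fz(3) by simp
    finally have e2: "pZX \<cdot> (fz \<cdot> w) = pZX \<cdot> (q \<cdot> k)" using w(3) by simp
    have h1: "fz \<cdot> w \<in> hom C (Dom C k) XZ" using wa fza by (simp add: hom_iff cs)
    have h2: "q \<cdot> k \<in> hom C (Dom C k) XZ" using qk by (simp add: hom_iff)
    have fw: "fz \<cdot> w = q \<cdot> k" using prod_uniq[OF prodX h1 h2 e1 e2] .
    have "Cod C D = Cod C piY" using Da py by simp
    then obtain pD where pbD: "is_pullback C D piY pD (inv_img C piY D)"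
      using inv_img_pb[OF lim Da(1) py(2)] by blast
    have "sub_le C (D \<cdot> l) D" using sub_le_comp[OF Da(1) kf(4) cl] .
    then have "sub_le C (piY \<cdot> w) D" using w(2) by simp
    moreover have "Cod C w = Dom C piY" using wa py by simp
    ultimately have "sub_le C w (inv_img C piY D)" using pb_sub_le[OF pbD wa(1)] by blast
    then have "sub_le C w (inv_img C fz S)"
      using sub_le_trans[OF _ H pb_facts(4)[OF pbD] pb_facts(4)[OF pbS]] by blast
    moreover have "Cod C w = Dom C fz" using wa fza by simp
    ultimately have "sub_le C (fz \<cdot> w) S" using pb_sub_le[OF pbS wa(1)] by blast
    then have sqk: "sub_le C (q \<cdot> k) S" using fw by simp
    have cqs: "Cod C q = Dom C s1" using cq sf Sr by simp
    have "Cod C (q \<cdot> k) = Dom C s1" using qk sf Sr by simp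
    then have "s1 \<cdot> (q \<cdot> k) = s2 \<cdot> (q \<cdot> k)" using eq_sub_le[OF seq qk(1)] sqk by blast
    moreover have "s1 \<cdot> (q \<cdot> k) = (s1 \<cdot> q) \<cdot> k" by (rule assoc) (use kf qf sf ck cqs in auto)
    moreover have "s2 \<cdot> (q \<cdot> k) = (s2 \<cdot> q) \<cdot> k" by (rule assoc) (use kf qf sf ck cqs in auto)
    ultimately have kk: "(s1 \<cdot> q) \<cdot> k = (s2 \<cdot> q) \<cdot> k" by simp
    have "s1 \<cdot> q \<in> Ar C" "s2 \<cdot> q \<in> Ar C" "Dom C (s1 \<cdot> q) = Cod C k" "Dom C (s2 \<cdot> q) = Cod C k"
      "Cod C (s1 \<cdot> q) = Cod C (s2 \<cdot> q)"
      using sf qf ck cqs by (auto simp: cs)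
    then have "s1 \<cdot> q = s2 \<cdot> q" using epk kk unfolding epi_def by blast
    then have "sub_le C q S" using eq_sub_le[OF seq qf(4) cqs] by blast
    moreover have "m \<in> reg_sub C X" using em(2) mX by (simp add: reg_sub_def)
    ultimately obtain i where i: "i \<in> {1..n}" "sub_le C m (B i)" using b unfolding q_def by blast
    have "sub_le C (m \<cdot> e) m" using sub_le_comp[OF ma ea] em(3) by simp
    then have "sub_le C (f \<cdot> D) m" using em(4) by simp
    then have "sub_le C (f \<cdot> D) (B i)" using sub_le_trans[OF _ i(2) ma Bi(1)[OF i(1)]] by blast
    moreover obtain pB where pbB: "is_pullback C (B i) f pB (inv_img C f (B i))"
      using pbf[OF i(1)] by blast
    moreover have "Cod C D = Dom C f" using Da fa by simp
    ultimately show ?thesis using pb_sub_le[OF pbB Da(1)] i(1) by blast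
  qed
  show ?thesis
  proof (intro conjI ballI impI)
    fix i assume "i \<in> {1..n}" then show "inv_img C f (B i) \<in> reg_sub C Y" by (rule P1)
  next
    fix i assume "i \<in> {1..n}"
    then show "sub_le C (inv_img C piY (inv_img C f (B i))) (inv_img C fz S)" by (rule P2)
  next
    fix D assume "D \<in> reg_sub C Y" "sub_le C (inv_img C piY D) (inv_img C fz S)"
    then show "\<exists>i \<in> {1..n}. sub_le C D (inv_img C f (B i))" by (rule P3)
  qed
qed

end
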